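(* Let $K_1\subset\mathbb C^m$ be a compact set with $A_D(K_1)=\overline{\mathcal O}(K_1)$, let $\omega\in A_D(K_1)$, and let \[ K=\{(z,w)\in\mathbb C^{m+1}: z\in K_1,\ w=\omega(z)\} \] be the graph of $\omega$. Then $A_D(K)=\overline{\mathcal O}(K)$.
   Context: For a compact $K\subset\mathbb C^n$: $\overline{\mathcal O}(K)$ is the closure in $C(K)$ (supremum norm) of restrictions to $K$ of functions holomorphic on some open neighbourhood of $K$; $A_D(K)$ is the set of continuous functions $f:K\to\mathbb C$ such that for every open disc $D\subset\mathbb C$ and every injective holomorphic mapping $\phi:D\to\mathbb C^n$ with $\phi(D)\subset K$, $f\circ\phi$ is holomorphic on $D$. *)

theory Defs
  imports "HOL-Analysis.Analysis"
begin

definition holo_on :: "(complex ^ 'n \<Rightarrow> complex) \<Rightarrow> (complex ^ 'n) set \<Rightarrow> bool" where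
  "holo_on f U \<longleftrightarrow>
     (\<forall>x\<in>U. \<exists>L. (f has_derivative L) (at x) \<and> (\<forall>c v. L (c *s v) = c * L v))"

definition Obar :: "(complex ^ 'n) set \<Rightarrow> (complex ^ 'n \<Rightarrow> complex) set" where
  "Obar K = {f. continuous_on K f \<and>
     (\<forall>e>0. \<exists>U g. open U \<and> K \<subseteq> U \<and> holo_on g U \<and> (\<forall>x\<in>K. norm (f x - g x) < e))}"

definition A_D :: "(complex ^ 'n) set \<Rightarrow> (complex ^ 'n \<Rightarrow> complex) set" where
  "A_D K = {f. continuous_on K f \<and>
     (\<forall>(a::complex) r (\<phi>::complex \<Rightarrow> complex ^ 'n). r > 0 \<longrightarrow>
        inj_on \<phi> (ball a r) \<longrightarrow>
        (\<forall>i. (\<lambda>z. \<phi> z $ i) holomorphic_on ball a r) \<longrightarrow>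
        \<phi> ` ball a r \<subseteq> K \<longrightarrow>
        (f \<circ> \<phi>) holomorphic_on ball a r)}"

text \<open>C^(m+1) is modelled as complex ^ ('m option): coordinate None is the extra
  variable w, coordinates Some i are z.\<close>

definition zpart :: "complex ^ ('m option) \<Rightarrow> complex ^ 'm" where
  "zpart x = (\<chi> i. x $ Some i)"

end

theory Submission imports Defs "HOL-Complex_Analysis.Cauchy_Integral_Formula" begin
lemma vec_has_derivative:
  fixes f :: "'a::euclidean_space \<Rightarrow> 'b::real_normed_vector ^ 'n"
  assumes "\<And>i. ((\<lambda>x. f x $ i) has_derivative (\<lambda>h. f' h $ i)) F"
  shows "(f has_derivative f') F"
proof -
  have li: "\<And>i. linear (\<lambda>h. f' h $ i)" using assms has_derivative_bounded_linear bounded_linear.linear by blast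
  have "linear f'"
    apply (rule linearI)
    using linear_add[OF li] linear_scale[OF li] by (auto simp: vec_eq_iff)
  then have bl: "bounded_linear f'" by (simp add: linear_conv_bounded_linear)
  show ?thesis using assms unfolding has_derivative_def
    apply (simp add: bl)
    apply (rule vec_tendstoI)
    apply simp
    done
qed

lemma holo_comp:
  fixes g :: "complex ^ 'n \<Rightarrow> complex"
  assumes g: "holo_on g U" and ph: "\<And>i. (\<lambda>z. \<phi> z $ i) holomorphic_on ball a r"
    and sub: "\<phi> ` ball a r \<subseteq> U"
  shows "(g \<circ> \<phi>) holomorphic_on ball a r"
  unfolding holomorphic_on_open[OF open_ball]
proof
  fix z assume z: "z \<in> ball a r"
  have "\<forall>i. \<exists>d. ((\<lambda>z. \<phi> z $ i) has_field_derivative d) (at z)"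
    using ph z holomorphic_on_open[OF open_ball] by blast
  then obtain d where d: "\<And>i. ((\<lambda>z. \<phi> z $ i) has_field_derivative d i) (at z)" by metis
  define v where "v = (\<chi> i. d i)"
  have pd: "(\<phi> has_derivative (\<lambda>h. h *s v)) (at z)"
    apply (rule vec_has_derivative)
  proof -
    fix i
    have "(\<lambda>h. h * d i) = (*) (d i)" by (auto simp: mult.commute)
    then show "((\<lambda>x. \<phi> x $ i) has_derivative (\<lambda>h. (h *s v) $ i)) (at z)"
      using d[of i] by (simp add: v_def has_field_derivative_def)
  qed
  obtain L where L: "(g has_derivative L) (at (\<phi> z))" "\<And>c w. L (c *s w) = c * L w"
    using g sub z unfolding holo_on_def by blast
  have "(g \<circ> \<phi> has_derivative L \<circ> (\<lambda>h. h *s v)) (at z)"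
    by (rule diff_chain_at[OF pd L(1)])
  moreover have "L \<circ> (\<lambda>h. h *s v) = (*) (L v)" using L(2) by (auto simp: fun_eq_iff mult.commute)
  ultimately have "(g \<circ> \<phi> has_field_derivative L v) (at z)"
    by (simp add: has_field_derivative_def)
  then show "\<exists>f'. (g \<circ> \<phi> has_field_derivative f') (at z)" by blast
qed

lemma Obar_sub_A_D: "Obar K \<subseteq> A_D K"
proof
  fix f assume f: "f \<in> Obar K"
  have fc: "continuous_on K f" using f by (simp add: Obar_def)
  have "\<forall>n::nat. \<exists>U g. open U \<and> K \<subseteq> U \<and> holo_on g U \<and> (\<forall>x\<in>K. norm (f x - g x) < inverse (real (Suc n)))"
    using f unfolding Obar_def by auto
  then obtain U G where UG: "\<And>n. open (U n)" "\<And>n. K \<subseteq> U n" "\<And>n. holo_on (G n) (U n)"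
    "\<And>n x. x \<in> K \<Longrightarrow> norm (f x - G n x) < inverse (real (Suc n))"
    by metis
  show "f \<in> A_D K"
    unfolding A_D_def
  proof (intro CollectI conjI allI impI fc)
    fix a r and \<phi> :: "complex \<Rightarrow> complex ^ 'a"
    assume r: "r > 0" and inj: "inj_on \<phi> (ball a r)"
      and ph: "\<forall>i. (\<lambda>z. \<phi> z $ i) holomorphic_on ball a r" and sub: "\<phi> ` ball a r \<subseteq> K"
    have hol: "\<And>n. (G n \<circ> \<phi>) holomorphic_on ball a r"
      using holo_comp[OF UG(3)] ph sub UG(2) by blast
    show "(f \<circ> \<phi>) holomorphic_on ball a r"
      unfolding holomorphic_on_open[OF open_ball]
    proof
      fix w assume w: "w \<in> ball a r"
      then obtain \<delta> where \<delta>: "\<delta> > 0" "cball w \<delta> \<subseteq> ball a r"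
        by (meson open_ball open_contains_cball)
      have ul: "uniform_limit (cball w \<delta>) (\<lambda>n. G n \<circ> \<phi>) (f \<circ> \<phi>) sequentially"
        unfolding uniform_limit_iff
      proof (intro allI impI)
        fix e :: real assume e: "e > 0"
        obtain N where N: "inverse (real (Suc N)) < e" using e reals_Archimedean by blast
        show "\<forall>\<^sub>F n in sequentially. \<forall>x\<in>cball w \<delta>. dist ((G n \<circ> \<phi>) x) ((f \<circ> \<phi>) x) < e"
          unfolding eventually_sequentially
        proof (intro exI allI impI ballI)
          fix n x assume n: "N \<le> n" and x: "x \<in> cball w \<delta>"
          have "\<phi> x \<in> K" using x \<delta> sub by blast
          then have "norm (f (\<phi> x) - G n (\<phi> x)) < inverse (real (Suc n))" by (rule UG(4))
          also have "\<dots> \<le> inverse (real (Suc N))" using n by (simp add: le_imp_inverse_le)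
          finally show "dist ((G n \<circ> \<phi>) x) ((f \<circ> \<phi>) x) < e" using N
            by (simp add: dist_norm norm_minus_commute)
        qed
      qed
      have ev: "\<forall>\<^sub>F n in sequentially. continuous_on (cball w \<delta>) (G n \<circ> \<phi>) \<and> (G n \<circ> \<phi>) holomorphic_on ball w \<delta>"
      proof (rule always_eventually, intro allI conjI)
        fix n
        show "continuous_on (cball w \<delta>) (G n \<circ> \<phi>)"
          using hol[of n] \<delta>(2) holomorphic_on_imp_continuous_on continuous_on_subset by blast
        show "(G n \<circ> \<phi>) holomorphic_on ball w \<delta>"
          using hol[of n] \<delta>(2) ball_subset_cball holomorphic_on_subset by blast
      qed
      obtain "(f \<circ> \<phi>) holomorphic_on ball w \<delta>"
        using holomorphic_uniform_limit[OF ev ul] by auto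
      then obtain f' where "((f \<circ> \<phi>) has_field_derivative f') (at w)"
        using holomorphic_on_open[OF open_ball] \<delta>(1) by (metis centre_in_ball)
      then show "\<exists>f'. ((f \<circ> \<phi>) has_field_derivative f') (at w)" by blast
    qed
  qed
qed
lemma zpart_linear: "linear zpart"
  by (rule linearI) (simp_all add: zpart_def vec_eq_iff)

lemma zpart_scale: "zpart (c *s v) = c *s zpart v"
  by (simp add: zpart_def vec_eq_iff)

theorem mainTheorem15:
  fixes K1 :: "(complex ^ 'm) set" and \<omega> :: "complex ^ 'm \<Rightarrow> complex"
  assumes "compact K1"
    and "A_D K1 = Obar K1"
    and "\<omega> \<in> A_D K1"
  shows "A_D {x :: complex ^ ('m option). zpart x \<in> K1 \<and> x $ None = \<omega> (zpart x)}
       = Obar {x :: complex ^ ('m option). zpart x \<in> K1 \<and> x $ None = \<omega> (zpart x)}"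
proof
  define K where "K = {x :: complex ^ ('m option). zpart x \<in> K1 \<and> x $ None = \<omega> (zpart x)}"
  show "Obar K \<subseteq> A_D K" by (rule Obar_sub_A_D)
  show "A_D K \<subseteq> Obar K"
  proof
    fix f assume f: "f \<in> A_D K"
    have fc: "continuous_on K f" using f by (simp add: A_D_def)
    have fD: "\<And>a r (\<phi>::complex \<Rightarrow> complex ^ ('m option)). r > 0 \<Longrightarrow> inj_on \<phi> (ball a r) \<Longrightarrow>
       (\<And>i. (\<lambda>z. \<phi> z $ i) holomorphic_on ball a r) \<Longrightarrow> \<phi> ` ball a r \<subseteq> K \<Longrightarrow>
       (f \<circ> \<phi>) holomorphic_on ball a r" using f by (simp add: A_D_def)
    have \<omega>c: "continuous_on K1 \<omega>" using assms(3) by (simp add: A_D_def)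
    define s :: "complex ^ 'm \<Rightarrow> complex ^ ('m option)" where
      "s z = (\<chi> j. case j of None \<Rightarrow> \<omega> z | Some i \<Rightarrow> z $ i)" for z
    have zs: "zpart (s z) = z" for z by (simp add: s_def zpart_def vec_eq_iff)
    have sK: "s z \<in> K" if "z \<in> K1" for z using that by (simp add: K_def zs) (simp add: s_def)
    have szK: "s (zpart x) = x" if "x \<in> K" for x
      using that unfolding K_def s_def by (auto simp: vec_eq_iff zpart_def split: option.split)
    have sc: "continuous_on K1 s"
      unfolding s_def
    proof (rule continuous_on_vec_lambda)
      fix j :: "'m option"
      show "continuous_on K1 (\<lambda>z. case j of None \<Rightarrow> \<omega> z | Some i \<Rightarrow> z $ i)"
        by (cases j) (auto simp: \<omega>c intro: continuous_on_component continuous_on_id)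
    qed
    have gA: "f \<circ> s \<in> A_D K1"
      unfolding A_D_def
    proof (intro CollectI conjI allI impI)
      show "continuous_on K1 (f \<circ> s)"
        by (rule continuous_on_compose[OF sc continuous_on_subset[OF fc]]) (auto intro: sK)
      fix a r and \<phi> :: "complex \<Rightarrow> complex ^ 'm"
      assume r: "r > 0" and inj: "inj_on \<phi> (ball a r)"
        and ph: "\<forall>i. (\<lambda>z. \<phi> z $ i) holomorphic_on ball a r" and sub: "\<phi> ` ball a r \<subseteq> K1"
      have \<omega>h: "(\<omega> \<circ> \<phi>) holomorphic_on ball a r" using assms(3) r inj ph sub by (simp add: A_D_def)
      have "(f \<circ> (s \<circ> \<phi>)) holomorphic_on ball a r"
      proof (rule fD[OF r])
        show "inj_on (s \<circ> \<phi>) (ball a r)" using inj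
          by (metis (no_types, lifting) comp_inj_on inj_on_def zs)
        show "(s \<circ> \<phi>) ` ball a r \<subseteq> K" using sub sK by auto
        fix j :: "'m option"
        show "(\<lambda>z. (s \<circ> \<phi>) z $ j) holomorphic_on ball a r"
          using ph \<omega>h by (cases j) (simp_all add: s_def o_def)
      qed
      then show "(f \<circ> s \<circ> \<phi>) holomorphic_on ball a r" by (simp add: o_assoc)
    qed
    then have gO: "f \<circ> s \<in> Obar K1" using assms(2) by simp
    show "f \<in> Obar K"
      unfolding Obar_def
    proof (intro CollectI conjI allI impI fc)
      fix e :: real assume e: "e > 0"
      then obtain U h where U: "open U" "K1 \<subseteq> U" "holo_on h U" "\<forall>x\<in>K1. norm ((f \<circ> s) x - h x) < e"
        using gO unfolding Obar_def by blast
      have zc: "continuous_on UNIV zpart"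
        using zpart_linear linear_conv_bounded_linear linear_continuous_on by blast
      have bl: "bounded_linear zpart" using zpart_linear by (simp add: linear_conv_bounded_linear)
      show "\<exists>U g. open U \<and> K \<subseteq> U \<and> holo_on g U \<and> (\<forall>x\<in>K. norm (f x - g x) < e)"
      proof (intro exI conjI ballI)
        show "open (zpart -` U)" using zc U(1) by (simp add: continuous_on_open_vimage) blast
        show "K \<subseteq> zpart -` U" using U(2) by (auto simp: K_def)
        show "holo_on (h \<circ> zpart) (zpart -` U)"
          unfolding holo_on_def
        proof
          fix x assume "x \<in> zpart -` U"
          then obtain L where L: "(h has_derivative L) (at (zpart x))" "\<forall>c v. L (c *s v) = c * L v"
            using U(3) unfolding holo_on_def by blast
          have "(h \<circ> zpart has_derivative L \<circ> zpart) (at x)"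
            by (rule diff_chain_at[OF bounded_linear_imp_has_derivative[OF bl] L(1)])
          moreover have "\<forall>c v. (L \<circ> zpart) (c *s v) = c * (L \<circ> zpart) v"
            using L(2) by (simp add: zpart_scale)
          ultimately show "\<exists>L. (h \<circ> zpart has_derivative L) (at x) \<and> (\<forall>c v. L (c *s v) = c * L v)"
            by blast
        qed
        fix x assume x: "x \<in> K"
        then have "zpart x \<in> K1" by (simp add: K_def)
        with U(4) have "norm (f (s (zpart x)) - h (zpart x)) < e" by simp
        then show "norm (f x - (h \<circ> zpart) x) < e" using szK[OF x] by simp
      qed
    qed
  qed
qed
end
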